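(* Let $\phi\ge1$. Consider a knapsack instance with arbitrary profits $p_1,\ldots,p_n\in\mathbb{R}_{\ge0}$ in which each weight $w_i$ is chosen uniformly at random from an arbitrary interval $A_i\subseteq[0,1]$ of length $1/\phi$, independently of the other weights, and let $\mathcal{P}$ be the set of Pareto-optimal solutions. Then for every $t\ge0$ and every $\varepsilon>0$, $\Pr[\exists x\in\mathcal{P}: w^{\mathsf T}x\in(t,t+\varepsilon]]\le n\phi\varepsilon$.
   Context: Solutions are vectors $x\in\{0,1\}^n$. A solution $y$ dominates $x$ if $p^{\mathsf T}y\ge p^{\mathsf T}x$ and $w^{\mathsf T}y\le w^{\mathsf T}x$ with at least one inequality strict; $x$ is Pareto-optimal if no solution dominates it. *)

theory Defs
  imports "HOL-Probability.Probability"
begin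

text \<open>Solutions are 0/1 vectors of length n, represented as functions on nat
  that take values in {0,1} on indices i < n and are 0 elsewhere.\<close>
definition solutions :: "nat \<Rightarrow> (nat \<Rightarrow> real) set" where
  "solutions n = {x. (\<forall>i<n. x i \<in> {0, 1}) \<and> (\<forall>i\<ge>n. x i = 0)}"

definition dotp :: "nat \<Rightarrow> (nat \<Rightarrow> real) \<Rightarrow> (nat \<Rightarrow> real) \<Rightarrow> real" where
  "dotp n v x = (\<Sum>i<n. v i * x i)"

definition dominates ::
  "nat \<Rightarrow> (nat \<Rightarrow> real) \<Rightarrow> (nat \<Rightarrow> real) \<Rightarrow> (nat \<Rightarrow> real) \<Rightarrow> (nat \<Rightarrow> real) \<Rightarrow> bool" where
  "dominates n p w y x \<longleftrightarrow>
     dotp n p y \<ge> dotp n p x \<and> dotp n w y \<le> dotp n w x \<and>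
     (dotp n p y > dotp n p x \<or> dotp n w y < dotp n w x)"

definition pareto_set :: "nat \<Rightarrow> (nat \<Rightarrow> real) \<Rightarrow> (nat \<Rightarrow> real) \<Rightarrow> (nat \<Rightarrow> real) set" where
  "pareto_set n p w =
     {x \<in> solutions n. \<not> (\<exists>y \<in> solutions n. dominates n p w y x)}"

definition weight_measure :: "nat \<Rightarrow> (nat \<Rightarrow> real) \<Rightarrow> real \<Rightarrow> (nat \<Rightarrow> real) measure" where
  "weight_measure n a \<phi> =
     PiM {..<n} (\<lambda>i. uniform_measure lborel {a i .. a i + 1 / \<phi>})"

end

theory Submission imports Defs begin

lemma finite_solutions: "finite (solutions n)"
proof -
  let ?g = "\<lambda>f::nat\<Rightarrow>real. \<lambda>i. if i < n then f i else 0"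
  have "solutions n \<subseteq> ?g ` ({..<n} \<rightarrow>\<^sub>E {0,1})"
  proof
    fix x assume x: "x \<in> solutions n"
    have "x = ?g (restrict x {..<n})" using x by (auto simp: solutions_def fun_eq_iff)
    moreover have "restrict x {..<n} \<in> {..<n} \<rightarrow>\<^sub>E {0,1}" using x by (auto simp: solutions_def)
    ultimately show "x \<in> ?g ` ({..<n} \<rightarrow>\<^sub>E {0,1})" by blast
  qed
  moreover have "finite ({..<n} \<rightarrow>\<^sub>E ({0,1}::real set))" by (intro finite_PiE) auto
  ultimately show ?thesis by (meson finite_imageI finite_subset)
qed

lemma dotp_upd:
  assumes "i < n"
  shows "dotp n (v(i:=u)) z = dotp n (v(i:=0)) z + u * z i"
proof -
  have "dotp n (v(i:=u)) z = (\<Sum>j<n. (v(i:=0)) j * z j + (if j = i then u * z j else 0))"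
    unfolding dotp_def by (intro sum.cong) auto
  also have "\<dots> = dotp n (v(i:=0)) z + u * z i"
    unfolding dotp_def sum.distrib using assms by (simp add: sum.delta)
  finally show ?thesis .
qed

lemma dotp_upd0:
  assumes "z i = 0"
  shows "dotp n (v(i:=u)) z = dotp n v z"
  unfolding dotp_def using assms by (intro sum.cong) auto

lemma comp_measurable[measurable]:
  "i \<in> {..<n} \<Longrightarrow> (\<lambda>w. w i) \<in> borel_measurable (weight_measure n a \<phi>)"
  unfolding weight_measure_def
  using measurable_component_singleton[of i "{..<n}" "\<lambda>i. uniform_measure lborel {a i..a i + 1 / \<phi>}"]
  by (simp add: measurable_def)

lemma dotp_measurable[measurable]:
  "(\<lambda>w. dotp n w y) \<in> borel_measurable (weight_measure n a \<phi>)"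
  unfolding dotp_def by measurable

definition Fp :: "nat \<Rightarrow> (nat \<Rightarrow> real) \<Rightarrow> real \<Rightarrow> real \<Rightarrow> nat \<Rightarrow> (nat \<Rightarrow> real) \<Rightarrow> bool" where
  "Fp n p t \<epsilon> i w \<longleftrightarrow> (\<exists>y\<in>solutions n. y i = 1 \<and> t < dotp n w y \<and> dotp n w y \<le> t + \<epsilon> \<and>
     (\<exists>x\<in>solutions n. x i = 0 \<and> dotp n w x \<le> t \<and>
        (\<forall>z\<in>solutions n. z i = 0 \<and> dotp n w z \<le> t \<longrightarrow> dotp n p z \<le> dotp n p x) \<and>
        dotp n p x < dotp n p y \<and>
        (\<forall>z\<in>solutions n. z i = 1 \<and> dotp n p x < dotp n p z \<longrightarrow> dotp n w y \<le> dotp n w z)))"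

lemma pred_sol_all[measurable (raw)]:
  "(\<And>z. z \<in> solutions n \<Longrightarrow> Measurable.pred M (\<lambda>x. P x z)) \<Longrightarrow> Measurable.pred M (\<lambda>x. \<forall>z\<in>solutions n. P x z)"
  by (rule pred_intros_finite(3)[OF finite_solutions])
lemma pred_sol_ex[measurable (raw)]:
  "(\<And>z. z \<in> solutions n \<Longrightarrow> Measurable.pred M (\<lambda>x. P x z)) \<Longrightarrow> Measurable.pred M (\<lambda>x. \<exists>z\<in>solutions n. P x z)"
  by (rule pred_intros_finite(4)[OF finite_solutions])

lemma fin_max: "finite A \<Longrightarrow> A \<noteq> {} \<Longrightarrow> \<exists>x\<in>A. \<forall>z\<in>A. (f::_\<Rightarrow>real) z \<le> f x"
proof -
  assume A: "finite A" "A \<noteq> {}"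
  have "Max (f ` A) \<in> f ` A" using A by (intro Max_in) auto
  then obtain x where "x \<in> A" "f x = Max (f ` A)" by (metis imageE)
  moreover have "\<forall>z\<in>A. f z \<le> Max (f ` A)" using A by auto
  ultimately show ?thesis by metis
qed
lemma fin_min: "finite A \<Longrightarrow> A \<noteq> {} \<Longrightarrow> \<exists>x\<in>A. \<forall>z\<in>A. (f::_\<Rightarrow>real) x \<le> f z"
proof -
  assume A: "finite A" "A \<noteq> {}"
  have "Min (f ` A) \<in> f ` A" using A by (intro Min_in) auto
  then obtain x where "x \<in> A" "f x = Min (f ` A)" by (metis imageE)
  moreover have "\<forall>z\<in>A. Min (f ` A) \<le> f z" using A by auto
  ultimately show ?thesis by metis
qed

lemma cover:
  assumes p: "\<And>j. j < n \<Longrightarrow> p j \<ge> 0" and t: "t \<ge> 0"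
    and x0: "x0 \<in> pareto_set n p w" "dotp n w x0 \<in> {t<..t + \<epsilon>}"
  shows "\<exists>i<n. Fp n p t \<epsilon> i w"
proof -
  let ?S = "solutions n"
  have finS: "finite ?S" by (rule finite_solutions)
  have x0S: "x0 \<in> ?S" and x0nd: "\<And>y. y \<in> ?S \<Longrightarrow> \<not> dominates n p w y x0"
    using x0(1) unfolding pareto_set_def by auto
  define A where "A = {z\<in>?S. dotp n w z \<le> t}"
  have "(\<lambda>_. 0) \<in> A" using t by (simp add: A_def solutions_def dotp_def)
  then obtain xs where xsA: "xs \<in> A" and xsmax: "\<And>z. z \<in> A \<Longrightarrow> dotp n p z \<le> dotp n p xs"
    using fin_max[of A "dotp n p"] finS unfolding A_def by auto
  define B where "B = {z\<in>?S. dotp n p z > dotp n p xs}"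
  have "x0 \<in> B"
  proof (rule ccontr)
    assume "x0 \<notin> B"
    then have "dotp n p x0 \<le> dotp n p xs" using x0S by (auto simp: B_def)
    moreover have "dotp n w xs < dotp n w x0" using xsA x0(2) by (auto simp: A_def)
    ultimately have "dominates n p w xs x0" unfolding dominates_def by auto
    with x0nd xsA show False by (auto simp: A_def)
  qed
  then obtain xh where xhB: "xh \<in> B" and xhmin: "\<And>z. z \<in> B \<Longrightarrow> dotp n w xh \<le> dotp n w z"
    using fin_min[of B "dotp n w"] finS unfolding B_def by auto
  have xsS: "xs \<in> ?S" and xhS: "xh \<in> ?S" using xsA xhB by (auto simp: A_def B_def)
  have "\<exists>i<n. xh i = 1 \<and> xs i = 0"
  proof (rule ccontr)
    assume H: "\<not> ?thesis"
    have "\<And>j. j < n \<Longrightarrow> p j * xh j \<le> p j * xs j"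
    proof -
      fix j assume j: "j < n"
      have "xh j \<in> {0,1}" "xs j \<in> {0,1}" using xsS xhS j by (auto simp: solutions_def)
      then show "p j * xh j \<le> p j * xs j" using H j p[OF j] by auto
    qed
    then have "dotp n p xh \<le> dotp n p xs" unfolding dotp_def by (intro sum_mono) auto
    then show False using xhB by (auto simp: B_def)
  qed
  then obtain i where i: "i < n" "xh i = 1" "xs i = 0" by blast
  have tl: "t < dotp n w xh"
  proof (rule ccontr)
    assume "\<not> t < dotp n w xh"
    then have "xh \<in> A" using xhS by (auto simp: A_def)
    then show False using xsmax xhB by (force simp: B_def)
  qed
  have "dotp n w xh \<le> t + \<epsilon>" using xhmin[OF \<open>x0 \<in> B\<close>] x0(2) by auto
  moreover have "dotp n w xs \<le> t" using xsA by (auto simp: A_def)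
  moreover have "\<forall>z\<in>?S. z i = 0 \<and> dotp n w z \<le> t \<longrightarrow> dotp n p z \<le> dotp n p xs"
    using xsmax by (auto simp: A_def)
  moreover have "dotp n p xs < dotp n p xh" using xhB by (auto simp: B_def)
  moreover have "\<forall>z\<in>?S. z i = 1 \<and> dotp n p xs < dotp n p z \<longrightarrow> dotp n w xh \<le> dotp n w z"
    using xhmin by (auto simp: B_def)
  ultimately have "Fp n p t \<epsilon> i w" unfolding Fp_def using i xsS xhS tl by blast
  then show ?thesis using i by blast
qed

lemma sect_bound:
  assumes i: "i < n"
  shows "\<exists>c. \<forall>u. Fp n p t \<epsilon> i (v(i:=u)) \<longrightarrow> t < u + c \<and> u + c \<le> t + \<epsilon>"
proof (cases "\<exists>u0. Fp n p t \<epsilon> i (v(i:=u0))")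
  case False then show ?thesis by auto
next
  case True
  then obtain u0 where u0: "Fp n p t \<epsilon> i (v(i:=u0))" by blast
  define R where "R y = dotp n (v(i:=0)) y" for y
  have dw: "\<And>u y. dotp n (v(i:=u)) y = R y + u * y i"
    unfolding R_def by (rule dotp_upd[OF i])
  have d0: "\<And>u u' y. y i = 0 \<Longrightarrow> dotp n (v(i:=u)) y = dotp n (v(i:=u')) y"
    unfolding dw by simp
  obtain y0 where y0: "y0 \<in> solutions n" "y0 i = 1" and
    "\<exists>x0\<in>solutions n. x0 i = 0 \<and> dotp n (v(i:=u0)) x0 \<le> t \<and>
      (\<forall>z\<in>solutions n. z i = 0 \<and> dotp n (v(i:=u0)) z \<le> t \<longrightarrow> dotp n p z \<le> dotp n p x0) \<and>
      dotp n p x0 < dotp n p y0 \<and>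
      (\<forall>z\<in>solutions n. z i = 1 \<and> dotp n p x0 < dotp n p z \<longrightarrow> dotp n (v(i:=u0)) y0 \<le> dotp n (v(i:=u0)) z)"
    using u0 unfolding Fp_def by (elim bexE conjE) blast
  then obtain x0 where x0: "x0 \<in> solutions n" "x0 i = 0" "dotp n (v(i:=u0)) x0 \<le> t"
      "\<forall>z\<in>solutions n. z i = 0 \<and> dotp n (v(i:=u0)) z \<le> t \<longrightarrow> dotp n p z \<le> dotp n p x0"
      "dotp n p x0 < dotp n p y0"
      "\<forall>z\<in>solutions n. z i = 1 \<and> dotp n p x0 < dotp n p z \<longrightarrow> dotp n (v(i:=u0)) y0 \<le> dotp n (v(i:=u0)) z"
    by (elim bexE conjE) blast
  show ?thesis
  proof (intro exI allI impI)
    fix u assume Fu: "Fp n p t \<epsilon> i (v(i:=u))"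
    obtain y where y: "y \<in> solutions n" "y i = 1" "t < dotp n (v(i:=u)) y" "dotp n (v(i:=u)) y \<le> t + \<epsilon>" and
      "\<exists>x\<in>solutions n. x i = 0 \<and> dotp n (v(i:=u)) x \<le> t \<and>
      (\<forall>z\<in>solutions n. z i = 0 \<and> dotp n (v(i:=u)) z \<le> t \<longrightarrow> dotp n p z \<le> dotp n p x) \<and>
      dotp n p x < dotp n p y \<and>
      (\<forall>z\<in>solutions n. z i = 1 \<and> dotp n p x < dotp n p z \<longrightarrow> dotp n (v(i:=u)) y \<le> dotp n (v(i:=u)) z)"
      using Fu unfolding Fp_def by (elim bexE conjE) blast
    then obtain x where x: "x \<in> solutions n" "x i = 0" "dotp n (v(i:=u)) x \<le> t"
      "\<forall>z\<in>solutions n. z i = 0 \<and> dotp n (v(i:=u)) z \<le> t \<longrightarrow> dotp n p z \<le> dotp n p x"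
      "dotp n p x < dotp n p y"
      "\<forall>z\<in>solutions n. z i = 1 \<and> dotp n p x < dotp n p z \<longrightarrow> dotp n (v(i:=u)) y \<le> dotp n (v(i:=u)) z"
      by (elim bexE conjE) blast
    have "dotp n (v(i:=u0)) x \<le> t" using x(3) d0[of x u0 u, OF x(2)] by simp
    then have "dotp n p x \<le> dotp n p x0" using x0(4) x(1,2) by blast
    moreover have "dotp n (v(i:=u)) x0 \<le> t" using x0(3) d0[of x0 u u0, OF x0(2)] by simp
    then have "dotp n p x0 \<le> dotp n p x" using x(4) x0(1,2) by blast
    ultimately have px: "dotp n p x = dotp n p x0" by simp
    have "dotp n p x < dotp n p y0" using px x0(5) by simp
    then have "dotp n (v(i:=u)) y \<le> dotp n (v(i:=u)) y0" using x(6) y0 by blast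
    then have r1: "R y \<le> R y0" unfolding dw using y(2) y0(2) by simp
    have "dotp n p x0 < dotp n p y" using px x(5) by simp
    then have "dotp n (v(i:=u0)) y0 \<le> dotp n (v(i:=u0)) y" using x0(6) y by blast
    then have r2: "R y0 \<le> R y" unfolding dw using y(2) y0(2) by simp
    from r1 r2 have "R y = R y0" by simp
    then show "t < u + R y0 \<and> u + R y0 \<le> t + \<epsilon>" using y(2,3,4) unfolding dw by simp
  qed
qed
lemma pred_c: "Measurable.pred M (\<lambda>w. (c::bool))" by simp
lemma pred_l1: "Measurable.pred (weight_measure n a \<phi>) (\<lambda>w. dotp n w y \<le> c)" by measurable
lemma pred_l2: "Measurable.pred (weight_measure n a \<phi>) (\<lambda>w. c < dotp n w y)" by measurable
lemma pred_l3: "Measurable.pred (weight_measure n a \<phi>) (\<lambda>w. dotp n w y \<le> dotp n w z)"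
  unfolding pred_def by (rule borel_measurable_le; rule dotp_measurable)
lemma pred_l4: "Measurable.pred (weight_measure n a \<phi>) (\<lambda>w. dotp n w y < dotp n w z)"
  unfolding pred_def by (rule borel_measurable_less; rule dotp_measurable)

lemma Fp_pred: "Measurable.pred (weight_measure n a \<phi>) (Fp n p t \<epsilon> i)"
  unfolding Fp_def
  by (intro pred_intros_logic(2,3,4,5) pred_sol_all pred_sol_ex pred_c pred_l1 pred_l2 pred_l3 pred_l4)

lemma E_measurable: "{w \<in> space (weight_measure n a \<phi>). \<exists>x \<in> pareto_set n p w. dotp n w x \<in> {t<..t + \<epsilon>}} \<in> sets (weight_measure n a \<phi>)"
proof -
  have eq: "{w \<in> space (weight_measure n a \<phi>). \<exists>x \<in> pareto_set n p w. dotp n w x \<in> {t<..t + \<epsilon>}}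
    = {w \<in> space (weight_measure n a \<phi>). \<exists>x \<in> solutions n. (\<forall>y\<in>solutions n. \<not> (dotp n p y \<ge> dotp n p x \<and> dotp n w y \<le> dotp n w x \<and>
     (dotp n p y > dotp n p x \<or> dotp n w y < dotp n w x))) \<and> t < dotp n w x \<and> dotp n w x \<le> t + \<epsilon>}"
    unfolding pareto_set_def dominates_def by auto
  have "Measurable.pred (weight_measure n a \<phi>) (\<lambda>w. \<exists>x \<in> solutions n. (\<forall>y\<in>solutions n. \<not> (dotp n p y \<ge> dotp n p x \<and> dotp n w y \<le> dotp n w x \<and>
     (dotp n p y > dotp n p x \<or> dotp n w y < dotp n w x))) \<and> t < dotp n w x \<and> dotp n w x \<le> t + \<epsilon>)"
    by (intro pred_intros_logic(2,3,4,5) pred_sol_all pred_sol_ex pred_c pred_l1 pred_l2 pred_l3 pred_l4)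
  then show ?thesis unfolding eq pred_def .
qed

lemma inner_bound:
  assumes i: "i < n" and phi: "\<phi> > 0" and eps: "\<epsilon> > 0"
  shows "(\<integral>\<^sup>+ y. indicator {w \<in> space (weight_measure n a \<phi>). Fp n p t \<epsilon> i w} (x(i:=y))
            \<partial>uniform_measure lborel {a i .. a i + 1 / \<phi>}) \<le> ennreal (\<phi> * \<epsilon>)"
proof -
  obtain c where c: "\<And>u. Fp n p t \<epsilon> i (x(i:=u)) \<Longrightarrow> t < u + c \<and> u + c \<le> t + \<epsilon>"
    using sect_bound[OF i, of p t \<epsilon> x] by blast
  let ?A = "{a i .. a i + 1 / \<phi>}"
  let ?B = "{t - c <.. t + \<epsilon> - c}"
  have "(\<integral>\<^sup>+ y. indicator {w \<in> space (weight_measure n a \<phi>). Fp n p t \<epsilon> i w} (x(i:=y))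
            \<partial>uniform_measure lborel ?A) \<le> (\<integral>\<^sup>+ y. indicator ?B y \<partial>uniform_measure lborel ?A)"
  proof (rule nn_integral_mono)
    fix y
    show "indicator {w \<in> space (weight_measure n a \<phi>). Fp n p t \<epsilon> i w} (x(i:=y)) \<le> (indicator ?B y :: ennreal)"
      using c[of y] by (auto simp: indicator_def)
  qed
  also have "\<dots> = emeasure (uniform_measure lborel ?A) ?B"
    by (rule nn_integral_indicator) simp
  also have "\<dots> = emeasure lborel (?A \<inter> ?B) / emeasure lborel ?A"
    by (rule emeasure_uniform_measure) auto
  also have "\<dots> \<le> emeasure lborel ?B / emeasure lborel ?A"
    by (intro divide_right_mono_ennreal emeasure_mono) auto
  also have "\<dots> = ennreal \<epsilon> / ennreal (1 / \<phi>)"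
    using phi eps by simp
  also have "\<dots> = ennreal (\<phi> * \<epsilon>)"
    using phi eps by (subst divide_ennreal) (auto simp: field_simps)
  finally show ?thesis .
qed

theorem lemma2p4:
  fixes n :: nat and \<phi> t \<epsilon> :: real and p a :: "nat \<Rightarrow> real"
  assumes "\<phi> \<ge> 1"
    and "\<And>i. i < n \<Longrightarrow> p i \<ge> 0"
    and "\<And>i. i < n \<Longrightarrow> 0 \<le> a i \<and> a i + 1 / \<phi> \<le> 1"
    and "t \<ge> 0" and "\<epsilon> > 0"
  shows "{w \<in> space (weight_measure n a \<phi>).
            \<exists>x \<in> pareto_set n p w. dotp n w x \<in> {t<..t + \<epsilon>}} \<in> sets (weight_measure n a \<phi>)
       \<and> measure (weight_measure n a \<phi>)
            {w \<in> space (weight_measure n a \<phi>).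
              \<exists>x \<in> pareto_set n p w. dotp n w x \<in> {t<..t + \<epsilon>}}
         \<le> real n * \<phi> * \<epsilon>"
proof -
  have phi: "\<phi> > 0" using assms(1) by simp
  define U where "U = (\<lambda>i. uniform_measure lborel {a i .. a i + 1 / \<phi>})"
  have Upr: "prob_space (U i)" for i
    unfolding U_def using phi by (intro prob_space_uniform_measure) auto
  interpret P: product_prob_space U "{..<n}"
    by (intro product_prob_space.intro product_sigma_finite.intro product_prob_space_axioms.intro
        prob_space_imp_sigma_finite Upr)
  let ?M = "weight_measure n a \<phi>"
  have M: "?M = PiM {..<n} U" unfolding weight_measure_def U_def by simp
  let ?E = "{w \<in> space ?M. \<exists>x \<in> pareto_set n p w. dotp n w x \<in> {t<..t + \<epsilon>}}"
  define F where "F i = {w \<in> space ?M. Fp n p t \<epsilon> i w}" for i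
  have Fs: "F i \<in> sets ?M" for i unfolding F_def using Fp_pred unfolding pred_def .
  have Es: "?E \<in> sets ?M" by (rule E_measurable)
  have sub: "?E \<subseteq> (\<Union>i\<in>{..<n}. F i)"
    using cover[OF assms(2) assms(4)] unfolding F_def by fastforce
  have Fb: "emeasure ?M (F i) \<le> ennreal (\<phi> * \<epsilon>)" if i: "i < n" for i
  proof -
    define I where "I = {..<n} - {i}"
    have ins: "{..<n} = insert i I" using i unfolding I_def by auto
    have fI: "finite I" "i \<notin> I" unfolding I_def by auto
    have "emeasure ?M (F i) = (\<integral>\<^sup>+ w. indicator (F i) w \<partial>PiM (insert i I) U)"
      using Fs[of i] unfolding M ins by simp
    also have "\<dots> = (\<integral>\<^sup>+ x. (\<integral>\<^sup>+ y. indicator (F i) (x(i := y)) \<partial>(U i)) \<partial>(PiM I U))"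
      using Fs[of i] unfolding M ins by (intro P.product_nn_integral_insert fI) simp
    also have "\<dots> \<le> (\<integral>\<^sup>+ x. ennreal (\<phi> * \<epsilon>) \<partial>(PiM I U))"
      unfolding F_def U_def using inner_bound[OF i phi assms(5)] by (intro nn_integral_mono) blast
    also have "\<dots> = ennreal (\<phi> * \<epsilon>)"
      using prob_space.emeasure_space_1[OF prob_space_PiM[of I U]] Upr by simp
    finally show ?thesis .
  qed
  have "emeasure ?M ?E \<le> emeasure ?M (\<Union>i\<in>{..<n}. F i)"
    by (rule emeasure_mono[OF sub]) (use Fs in auto)
  also have "\<dots> \<le> (\<Sum>i\<in>{..<n}. emeasure ?M (F i))"
    by (rule emeasure_subadditive_finite) (use Fs in auto)
  also have "\<dots> \<le> (\<Sum>i\<in>{..<n}. ennreal (\<phi> * \<epsilon>))"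
    by (intro sum_mono Fb) simp
  also have "\<dots> = ennreal (real n * \<phi> * \<epsilon>)"
    using phi assms(5) by (simp add: ennreal_of_nat_eq_real_of_nat ennreal_mult mult.assoc)
  finally have le: "emeasure ?M ?E \<le> ennreal (real n * \<phi> * \<epsilon>)" .
  have "emeasure ?M ?E = ennreal (measure ?M ?E)"
    unfolding M by (rule P.emeasure_eq_measure)
  with le have "measure ?M ?E \<le> real n * \<phi> * \<epsilon>"
    using phi assms(5) by (simp add: ennreal_le_iff)
  with Es show ?thesis by blast
qed

end
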